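(* For all integers $n,h,b\ge0$, $E_n(h,b)=F_n(h,b)$, where $E_n(h,b)=|\mathcal{B}^{(h,b)}_{n+1}(213)|$ and $F_n(h,b)=|\mathcal{G}(n;h,b)|$.
   Context: For integers $h,b\ge0$, a permutation $\pi\in\mathfrak{S}_{n+1}$ is an $(h,b)$-ballot permutation if the lattice path starting at $(0,h)$ whose $i$th step ($i\in[n]$) is $(1,1)$ if $\pi_i<\pi_{i+1}$ and $(1,-1)$ if $\pi_i>\pi_{i+1}$ ends at $(n,b)$ and never goes below the $x$-axis. $\mathcal{B}^{(h,b)}_{n+1}(213)$ is the set of $(h,b)$-ballot permutations in $\mathfrak{S}_{n+1}$ with no subsequence order-isomorphic to $213$. A Gessel walk is a lattice path confined to $\mathbb{N}^2$ with steps from $\{(0,1),(0,-1),(1,1),(-1,-1)\}$; $\mathcal{G}(n;h,b)$ is the set of $n$-step Gessel walks from $(0,h)$ to $(0,b)$. *)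

theory Defs
  imports Main
begin

definition is_perm :: "nat \<Rightarrow> nat list \<Rightarrow> bool" where
  "is_perm m p \<longleftrightarrow> distinct p \<and> set p = {1..m}"

definition avoids_213 :: "nat list \<Rightarrow> bool" where
  "avoids_213 p \<longleftrightarrow> \<not> (\<exists>i j k. i < j \<and> j < k \<and> k < length p \<and>
                                p ! j < p ! i \<and> p ! i < p ! k)"

definition ballot_height :: "nat \<Rightarrow> nat list \<Rightarrow> nat \<Rightarrow> int" where
  "ballot_height h p k = int h + (\<Sum>i<k. if p ! i < p ! Suc i then 1 else -1)"

definition ballot_perm :: "nat \<Rightarrow> nat \<Rightarrow> nat \<Rightarrow> nat list \<Rightarrow> bool" where
  "ballot_perm n h b p \<longleftrightarrow> is_perm (n + 1) p \<and>
     (\<forall>k\<le>n. ballot_height h p k \<ge> 0) \<and> ballot_height h p n = int b"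

definition ballot_213 :: "nat \<Rightarrow> nat \<Rightarrow> nat \<Rightarrow> nat list set" where
  "ballot_213 n h b = {p. ballot_perm n h b p \<and> avoids_213 p}"

definition gessel_steps :: "(int \<times> int) set" where
  "gessel_steps = {(0, 1), (0, -1), (1, 1), (-1, -1)}"

definition walk_pos :: "nat \<Rightarrow> (int \<times> int) list \<Rightarrow> nat \<Rightarrow> int \<times> int" where
  "walk_pos h w k = (sum_list (map fst (take k w)), int h + sum_list (map snd (take k w)))"

definition gessel_walks :: "nat \<Rightarrow> nat \<Rightarrow> nat \<Rightarrow> (int \<times> int) list set" where
  "gessel_walks n h b = {w. length w = n \<and> set w \<subseteq> gessel_steps \<and>
     (\<forall>k\<le>n. fst (walk_pos h w k) \<ge> 0 \<and> snd (walk_pos h w k) \<ge> 0) \<and>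
     walk_pos h w n = (0, int b)}"

end

theory Submission
  imports Defs
begin

definition sh :: "nat \<Rightarrow> nat \<Rightarrow> nat" where
  "sh v x = (if v \<le> x then Suc x else x)"

definition ins :: "nat \<Rightarrow> nat list \<Rightarrow> nat list" where
  "ins v p = map (sh v) p @ [v]"

definition del :: "nat list \<Rightarrow> nat list" where
  "del p = map (\<lambda>x. if last p < x then x - 1 else x) (butlast p)"

lemma sh_less_iff[simp]: "sh v a < sh v b \<longleftrightarrow> a < b"
  by (auto simp: sh_def)

lemma sh_inj: "inj (sh v)"
  by (auto simp: inj_def sh_def split: if_splits)

lemma sh_neq[simp]: "sh v x \<noteq> v"
  by (auto simp: sh_def)

lemma sh_less_v[simp]: "sh v x < v \<longleftrightarrow> x < v"
  by (auto simp: sh_def)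

lemma ins_inj: "inj (ins v)"
  using sh_inj by (auto simp: inj_def ins_def inj_map_eq_map)

lemma length_ins[simp]: "length (ins v p) = Suc (length p)"
  by (simp add: ins_def)

lemma last_ins[simp]: "last (ins v p) = v"
  by (simp add: ins_def)

lemma nth_ins_lt: "i < length p \<Longrightarrow> ins v p ! i = sh v (p ! i)"
  by (simp add: ins_def nth_append)

lemma nth_ins_len: "ins v p ! length p = v"
  by (simp add: ins_def nth_append)

lemma is_perm_length: "is_perm m p \<Longrightarrow> length p = m"
  unfolding is_perm_def using distinct_card by fastforce

lemma sh_image:
  assumes "1 \<le> v" "v \<le> Suc m"
  shows "sh v ` {1..m} = {1..Suc m} - {v}"
proof
  show "sh v ` {1..m} \<subseteq> {1..Suc m} - {v}" by (auto simp: sh_def)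
  show "{1..Suc m} - {v} \<subseteq> sh v ` {1..m}"
  proof
    fix x assume x: "x \<in> {1..Suc m} - {v}"
    show "x \<in> sh v ` {1..m}"
    proof (cases "x < v")
      case True then have "sh v x = x" by (simp add: sh_def)
      moreover have "x \<in> {1..m}" using x True assms by auto
      ultimately show ?thesis by (metis image_eqI)
    next
      case False
      then obtain y where "x = Suc y" "v \<le> y" using x by (cases x) auto
      then show ?thesis using x assms by (auto simp: sh_def image_iff intro!: bexI[of _ y])
    qed
  qed
qed

lemma perm_ins:
  assumes "is_perm m p" "1 \<le> v" "v \<le> Suc m"
  shows "is_perm (Suc m) (ins v p)"
proof -
  have d: "distinct (map (sh v) p)" using assms(1) sh_inj[of v]
    by (simp add: is_perm_def distinct_map inj_on_def inj_def)
  have "set (map (sh v) p) = {1..Suc m} - {v}" using assms sh_image by (simp add: is_perm_def)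
  then show ?thesis using d assms unfolding is_perm_def ins_def by auto
qed

lemma del_ins[simp]: "del (ins v p) = p"
  by (auto simp: del_def ins_def sh_def intro!: map_idI)

lemma ins_del:
  assumes "distinct p'" "p' \<noteq> []"
  shows "ins (last p') (del p') = p'"
proof -
  have nl: "last p' \<notin> set (butlast p')" using assms
    by (metis append_butlast_last_id distinct_append not_distinct_conv_prefix)
  have "map (sh (last p')) (del p') = butlast p'"
    unfolding del_def map_map
    by (rule map_idI) (use nl in \<open>auto simp: sh_def\<close>)
  then show ?thesis using assms by (simp add: ins_def)
qed

lemma bh_ins_le:
  assumes "k < length p"
  shows "ballot_height h (ins v p) k = ballot_height h p k"
  unfolding ballot_height_def
proof (intro arg_cong[where f="\<lambda>x. int h + x"] sum.cong refl)
  fix i assume "i \<in> {..<k}"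
  then have "i < length p" "Suc i < length p" using assms by auto
  then show "(if ins v p ! i < ins v p ! Suc i then 1 else -1) = (if p ! i < p ! Suc i then 1 else (-1::int))"
    by (simp add: nth_ins_lt)
qed

lemma bh_ins_last:
  assumes "length p = Suc m"
  shows "ballot_height h (ins v p) (Suc m) = ballot_height h p m + (if last p < v then 1 else -1)"
proof -
  have l: "last p = p ! m" using assms by (cases p rule: rev_cases) (auto simp: nth_append)
  have "ballot_height h (ins v p) (Suc m) = ballot_height h (ins v p) m + (if ins v p ! m < ins v p ! Suc m then 1 else -1)"
    by (simp add: ballot_height_def)
  also have "ballot_height h (ins v p) m = ballot_height h p m" using assms by (simp add: bh_ins_le)
  also have "ins v p ! m = sh v (last p)" using assms l by (simp add: nth_ins_lt)
  also have "ins v p ! Suc m = v" using assms nth_ins_len[of v p] by simp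
  finally show ?thesis by simp
qed

lemma perm_del:
  assumes "is_perm (Suc m) p'"
  shows "is_perm m (del p')"
proof -
  have ne: "p' \<noteq> []" using assms by (auto simp: is_perm_def)
  define v where "v = last p'"
  define q where "q = del p'"
  have lp: "1 \<le> v" "v \<le> Suc m" using assms ne last_in_set[OF ne] by (auto simp: is_perm_def v_def)
  have eq: "map (sh v) q @ [v] = p'"
    using ins_del[of p'] assms ne unfolding is_perm_def ins_def v_def q_def by auto
  have dp': "distinct (map (sh v) q @ [v])" using assms eq by (simp add: is_perm_def)
  have dp: "distinct (map (sh v) q)" "v \<notin> set (map (sh v) q)"
    using dp' by (simp_all only: distinct_append distinct_singleton) auto
  have dq: "distinct q" using dp(1) by (simp add: distinct_map)
  have "set p' = set (map (sh v) q @ [v])" by (simp only: eq)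
  then have "set (map (sh v) q) \<union> {v} = {1..Suc m}" using assms by (simp add: is_perm_def)
  then have "sh v ` set q = {1..Suc m} - {v}" using dp(2) by auto
  also have "\<dots> = sh v ` {1..m}" using sh_image[of v m] lp by simp
  finally have "set q = {1..m}" using inj_image_eq_iff[OF sh_inj] by blast
  then show ?thesis using dq by (simp add: is_perm_def q_def)
qed

lemma avoid_ins:
  assumes "is_perm m p" "p \<noteq> []" "1 \<le> v" "v \<le> Suc m"
  shows "avoids_213 (ins v p) \<longleftrightarrow> avoids_213 p \<and> v \<le> Suc (last p)"
proof -
  have len: "length p = m" using assms(1) by (rule is_perm_length)
  define L where "L = length p - 1"
  have L: "L < length p" "last p = p ! L" "Suc L = length p" using assms(2) by (auto simp: L_def last_conv_nth)
  have dist: "distinct p" using assms(1) by (simp add: is_perm_def)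
  show ?thesis
  proof
    assume a: "avoids_213 (ins v p)"
    have "avoids_213 p"
      unfolding avoids_213_def
    proof
      assume "\<exists>i j k. i < j \<and> j < k \<and> k < length p \<and> p ! j < p ! i \<and> p ! i < p ! k"
      then obtain i j k where ijk: "i < j" "j < k" "k < length p" "p ! j < p ! i" "p ! i < p ! k" by blast
      then have "ins v p ! j < ins v p ! i" "ins v p ! i < ins v p ! k"
        by (simp_all add: nth_ins_lt)
      then show False using a ijk unfolding avoids_213_def
        by (metis length_ins less_SucI)
    qed
    moreover have "v \<le> Suc (last p)"
    proof (rule ccontr)
      assume "\<not> v \<le> Suc (last p)"
      then have v2: "Suc (Suc (last p)) \<le> v" by simp
      have "Suc (last p) \<in> set p" using assms(1) v2 assms(4) len by (auto simp: is_perm_def)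
      then obtain i where i: "i < length p" "p ! i = Suc (last p)" by (auto simp: in_set_conv_nth)
      have "i \<noteq> L" using i L by auto
      then have iL: "i < L" using i L by auto
      have "ins v p ! i = Suc (last p)" using i v2 by (simp add: nth_ins_lt sh_def)
      moreover have "ins v p ! L = last p" using L v2 by (simp add: nth_ins_lt sh_def)
      moreover have "ins v p ! Suc L = v" using L nth_ins_len[of v p] by simp
      ultimately show False using a iL v2 L unfolding avoids_213_def
        by (metis Suc_le_lessD length_ins lessI lessI)
    qed
    ultimately show "avoids_213 p \<and> v \<le> Suc (last p)" by blast
  next
    assume a: "avoids_213 p \<and> v \<le> Suc (last p)"
    show "avoids_213 (ins v p)"
      unfolding avoids_213_def
    proof
      assume "\<exists>i j k. i < j \<and> j < k \<and> k < length (ins v p) \<and> ins v p ! j < ins v p ! i \<and> ins v p ! i < ins v p ! k"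
      then obtain i j k where ijk: "i < j" "j < k" "k < length (ins v p)" "ins v p ! j < ins v p ! i" "ins v p ! i < ins v p ! k" by blast
      show False
      proof (cases "k < length p")
        case True
        then have "p ! j < p ! i" "p ! i < p ! k" using ijk by (simp_all add: nth_ins_lt)
        then show False using a ijk True unfolding avoids_213_def by blast
      next
        case False
        then have k: "k = length p" using ijk by simp
        have i: "i < length p" "j < length p" using ijk k by auto
        have vk: "ins v p ! k = v" using k nth_ins_len by simp
        have pij: "p ! j < p ! i" using ijk i by (simp add: nth_ins_lt)
        have "sh v (p ! i) < v" using ijk i vk by (simp add: nth_ins_lt)
        then have piv: "p ! i < v" by simp
        have "p ! i \<noteq> last p" using L i ijk dist by (metis nth_eq_iff_index_eq less_irrefl order.strict_trans less_Suc_eq_le not_le)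
        then have pil: "p ! i < last p" using piv a by simp
        show False
        proof (cases "j = L")
          case True then show ?thesis using pij pil L by simp
        next
          case False
          then have "j < L" using i L by auto
          then show ?thesis using a pij pil ijk L unfolding avoids_213_def by metis
        qed
      qed
    qed
  qed
qed



definition PS :: "nat \<Rightarrow> nat \<Rightarrow> int \<Rightarrow> nat \<Rightarrow> nat list set" where
  "PS h n y j = {p. is_perm (Suc n) p \<and> avoids_213 p \<and> (\<forall>k\<le>n. ballot_height h p k \<ge> 0)
      \<and> ballot_height h p n = y \<and> last p = Suc j}"

lemma finite_perms: "finite {p. is_perm m p}"
proof (rule finite_subset)
  show "{p. is_perm m p} \<subseteq> {xs. set xs \<subseteq> {1..m} \<and> length xs = m}"
    using is_perm_length by (auto simp: is_perm_def)
  show "finite {xs. set xs \<subseteq> {1..m} \<and> length xs = m}"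
    by (rule finite_lists_length_eq) simp
qed

lemma finite_PS: "finite (PS h n y j)"
  by (rule finite_subset[OF _ finite_perms[of "Suc n"]]) (auto simp: PS_def)

lemma last_perm: "is_perm (Suc m) p \<Longrightarrow> last p \<in> {1..Suc m}"
  by (metis is_perm_def last_in_set is_perm_length length_0_conv nat.distinct(1))

lemma ballot_213_UN: "ballot_213 n h b = (\<Union>j\<in>{..n}. PS h n (int b) j)"
proof (intro set_eqI iffI)
  fix p assume p: "p \<in> ballot_213 n h b"
  then have pp: "is_perm (Suc n) p" by (simp add: ballot_213_def ballot_perm_def)
  then have "last p \<in> {1..Suc n}" by (rule last_perm)
  then have "last p = Suc (last p - 1)" "last p - 1 \<le> n" by auto
  then show "p \<in> (\<Union>j\<in>{..n}. PS h n (int b) j)" using p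
    by (auto simp: ballot_213_def ballot_perm_def PS_def intro!: bexI[of _ "last p - 1"])
next
  fix p assume "p \<in> (\<Union>j\<in>{..n}. PS h n (int b) j)"
  then show "p \<in> ballot_213 n h b" by (auto simp: ballot_213_def ballot_perm_def PS_def)
qed

lemma card_ballot_213: "card (ballot_213 n h b) = (\<Sum>j\<le>n. card (PS h n (int b) j))"
  unfolding ballot_213_UN
  apply (rule card_UN_disjoint)
    apply simp
   apply (simp add: finite_PS)
  apply (auto simp: PS_def)
  done

lemma PS_neg: "y < 0 \<Longrightarrow> PS h n y j = {}"
  by (auto simp: PS_def)

lemma perm1: "is_perm (Suc 0) p \<longleftrightarrow> p = [Suc 0]"
proof
  assume a: "is_perm (Suc 0) p"
  then have "length p = 1" using is_perm_length by simp
  then obtain x where "p = [x]" by (cases p) auto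
  then show "p = [Suc 0]" using a by (auto simp: is_perm_def)
qed (auto simp: is_perm_def)

lemma card_PS_0: "card (PS h 0 y j) = (if y = int h \<and> j = 0 then 1 else 0)"
proof -
  have "PS h 0 y j = (if y = int h \<and> j = 0 then {[1]} else {})"
    by (auto simp: PS_def perm1 avoids_213_def ballot_height_def)
  then show ?thesis by simp
qed

definition UU :: "nat \<Rightarrow> nat \<Rightarrow> int \<Rightarrow> nat \<Rightarrow> nat list set" where
  "UU h n y j' = {p. is_perm (Suc n) p \<and> avoids_213 p \<and> (\<forall>k\<le>n. ballot_height h p k \<ge> 0)
      \<and> j' \<le> last p \<and> ballot_height h p n + (if last p < Suc j' then 1 else -1) = y}"

lemma PS_Suc_img:
  assumes "0 \<le> y" "j' \<le> Suc n"
  shows "PS h (Suc n) y j' = ins (Suc j') ` UU h n y j'"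
proof (intro set_eqI iffI)
  fix p' assume a: "p' \<in> PS h (Suc n) y j'"
  define p where "p = del p'"
  have pp': "is_perm (Suc (Suc n)) p'" using a by (simp add: PS_def)
  have ne: "p' \<noteq> []" using pp' by (auto simp: is_perm_def)
  have eq: "p' = ins (Suc j') p" using ins_del[of p'] pp' ne a by (simp add: is_perm_def PS_def p_def)
  have pp: "is_perm (Suc n) p" using perm_del[OF pp'] by (simp add: p_def)
  have len: "length p = Suc n" using pp by (rule is_perm_length)
  have pne: "p \<noteq> []" using len by auto
  have av: "avoids_213 p \<and> Suc j' \<le> Suc (last p)"
    using avoid_ins[OF pp pne, of "Suc j'"] a assms eq by (simp add: PS_def)
  have hk: "ballot_height h p k \<ge> 0" if "k \<le> n" for k
  proof -
    have "ballot_height h p' k \<ge> 0" using a that by (simp add: PS_def)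
    then show ?thesis using bh_ins_le[of k p h "Suc j'"] len that eq by simp
  qed
  have "ballot_height h p' (Suc n) = y" using a by (simp add: PS_def)
  then have hn: "ballot_height h p n + (if last p < Suc j' then 1 else -1) = y"
    using bh_ins_last[OF len, of h "Suc j'"] eq by simp
  have "p \<in> UU h n y j'" using pp av hk hn by (simp add: UU_def)
  then show "p' \<in> ins (Suc j') ` UU h n y j'" using eq by blast
next
  fix p' assume "p' \<in> ins (Suc j') ` UU h n y j'"
  then obtain p where p: "p \<in> UU h n y j'" and eq: "p' = ins (Suc j') p" by blast
  have pp: "is_perm (Suc n) p" using p by (simp add: UU_def)
  have len: "length p = Suc n" using pp by (rule is_perm_length)
  have pne: "p \<noteq> []" using len by auto
  have pp': "is_perm (Suc (Suc n)) p'" using perm_ins[OF pp, of "Suc j'"] assms eq by simp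
  have av: "avoids_213 p'" using avoid_ins[OF pp pne, of "Suc j'"] assms eq p by (simp add: UU_def)
  have hlast: "ballot_height h p' (Suc n) = y"
    using bh_ins_last[OF len, of h "Suc j'"] eq p by (simp add: UU_def)
  have hk: "ballot_height h p' k \<ge> 0" if "k \<le> Suc n" for k
  proof (cases "k = Suc n")
    case True then show ?thesis using hlast assms by simp
  next
    case False
    then have "k \<le> n" using that by simp
    then show ?thesis using bh_ins_le[of k p h "Suc j'"] len eq p by (simp add: UU_def)
  qed
  show "p' \<in> PS h (Suc n) y j'" using pp' av hlast hk eq by (simp add: PS_def)
qed

lemma UU_split:
  "UU h n y j' = (if j' = 0 then {} else PS h n (y - 1) (j' - 1)) \<union> (\<Union>j\<in>{j'..n}. PS h n (y + 1) j)"
proof (intro set_eqI iffI)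
  fix p assume p: "p \<in> UU h n y j'"
  have pp: "is_perm (Suc n) p" using p by (simp add: UU_def)
  have lp: "last p \<in> {1..Suc n}" using last_perm[OF pp] .
  show "p \<in> (if j' = 0 then {} else PS h n (y - 1) (j' - 1)) \<union> (\<Union>j\<in>{j'..n}. PS h n (y + 1) j)"
  proof (cases "last p < Suc j'")
    case True
    then have "last p = j'" "j' \<noteq> 0" using p lp by (auto simp: UU_def)
    then show ?thesis using p True by (auto simp: UU_def PS_def)
  next
    case False
    then have "last p = Suc (last p - 1)" "j' \<le> last p - 1" "last p - 1 \<le> n" using lp by auto
    then show ?thesis using p False by (auto simp: UU_def PS_def intro!: bexI[of _ "last p - 1"])
  qed
next
  fix p assume "p \<in> (if j' = 0 then {} else PS h n (y - 1) (j' - 1)) \<union> (\<Union>j\<in>{j'..n}. PS h n (y + 1) j)"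
  then show "p \<in> UU h n y j'"
    by (auto simp: UU_def PS_def split: if_splits)
qed

lemma card_PS_Suc:
  assumes "0 \<le> y" "j' \<le> Suc n"
  shows "card (PS h (Suc n) y j') = (if j' = 0 then 0 else card (PS h n (y - 1) (j' - 1)))
           + (\<Sum>j\<in>{j'..n}. card (PS h n (y + 1) j))"
proof -
  have "card (PS h (Suc n) y j') = card (UU h n y j')"
    unfolding PS_Suc_img[OF assms] by (rule card_image) (rule inj_on_subset[OF ins_inj], simp)
  also have "\<dots> = card (if j' = 0 then {} else PS h n (y - 1) (j' - 1)) + card (\<Union>j\<in>{j'..n}. PS h n (y + 1) j)"
    unfolding UU_split
    apply (rule card_Un_disjoint)
      apply (simp add: finite_PS)
     apply (simp add: finite_PS)
    apply (auto simp: PS_def)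
    done
  also have "card (\<Union>j\<in>{j'..n}. PS h n (y + 1) j) = (\<Sum>j\<in>{j'..n}. card (PS h n (y + 1) j))"
    apply (rule card_UN_disjoint)
      apply simp
     apply (simp add: finite_PS)
    apply (auto simp: PS_def)
    done
  finally show ?thesis by simp
qed



definition GW :: "nat \<Rightarrow> nat \<Rightarrow> int \<Rightarrow> int \<Rightarrow> (int \<times> int) list set" where
  "GW h n x y = {w. length w = n \<and> set w \<subseteq> gessel_steps \<and>
     (\<forall>k\<le>n. fst (walk_pos h w k) \<ge> 0 \<and> snd (walk_pos h w k) \<ge> 0) \<and> walk_pos h w n = (x, y)}"

lemma gessel_GW: "gessel_walks n h b = GW h n 0 (int b)"
  by (simp add: gessel_walks_def GW_def)

lemma finite_GW: "finite (GW h n x y)"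
proof (rule finite_subset)
  show "GW h n x y \<subseteq> {xs. set xs \<subseteq> gessel_steps \<and> length xs = n}" by (auto simp: GW_def)
  show "finite {xs. set xs \<subseteq> gessel_steps \<and> length xs = n}"
    by (rule finite_lists_length_eq) (simp add: gessel_steps_def)
qed

lemma GW_neg: "x < 0 \<or> y < 0 \<Longrightarrow> GW h n x y = {}"
  by (auto simp: GW_def)

lemma card_GW_0: "card (GW h 0 x y) = (if x = 0 \<and> y = int h then 1 else 0)"
proof -
  have "GW h 0 x y = (if x = 0 \<and> y = int h then {[]} else {})"
    by (auto simp: GW_def walk_pos_def)
  then show ?thesis by simp
qed

lemma wp_app_le: "k \<le> length w \<Longrightarrow> walk_pos h (w @ [s]) k = walk_pos h w k"
  by (simp add: walk_pos_def)

lemma wp_app_last: "walk_pos h (w @ [s]) (Suc (length w)) =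
   (fst (walk_pos h w (length w)) + fst s, snd (walk_pos h w (length w)) + snd s)"
  by (simp add: walk_pos_def)

lemma GW_Suc:
  assumes "0 \<le> x" "0 \<le> y"
  shows "GW h (Suc n) x y = (\<Union>s\<in>gessel_steps. (\<lambda>w. w @ [s]) ` GW h n (x - fst s) (y - snd s))"
proof (intro set_eqI iffI)
  fix w' assume a: "w' \<in> GW h (Suc n) x y"
  then have ne: "w' \<noteq> []" by (auto simp: GW_def)
  define w where "w = butlast w'"
  define s where "s = last w'"
  have eq: "w' = w @ [s]" using ne by (simp add: w_def s_def)
  have len: "length w = n" using a eq by (simp add: GW_def)
  have s: "s \<in> gessel_steps" using a eq by (auto simp: GW_def)
  have sw: "set w \<subseteq> gessel_steps" using a eq by (auto simp: GW_def)
  have k: "fst (walk_pos h w k) \<ge> 0 \<and> snd (walk_pos h w k) \<ge> 0" if "k \<le> n" for k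
  proof -
    have "k \<le> Suc n" using that by simp
    then have "fst (walk_pos h w' k) \<ge> 0 \<and> snd (walk_pos h w' k) \<ge> 0" using a by (simp add: GW_def)
    moreover have "walk_pos h w' k = walk_pos h w k" using eq wp_app_le that len by simp
    ultimately show ?thesis by simp
  qed
  have "walk_pos h w' (Suc n) = (x, y)" using a by (simp add: GW_def)
  then have "walk_pos h w n = (x - fst s, y - snd s)"
    using wp_app_last[of h w s] eq len by (cases "walk_pos h w n") auto
  then have "w \<in> GW h n (x - fst s) (y - snd s)" using len sw k by (simp add: GW_def)
  then show "w' \<in> (\<Union>s\<in>gessel_steps. (\<lambda>w. w @ [s]) ` GW h n (x - fst s) (y - snd s))"
    using s eq by blast
next
  fix w' assume "w' \<in> (\<Union>s\<in>gessel_steps. (\<lambda>w. w @ [s]) ` GW h n (x - fst s) (y - snd s))"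
  then obtain s w where s: "s \<in> gessel_steps" and w: "w \<in> GW h n (x - fst s) (y - snd s)"
    and eq: "w' = w @ [s]" by blast
  have len: "length w = n" using w by (simp add: GW_def)
  have fin: "walk_pos h w' (Suc n) = (x, y)"
    using wp_app_last[of h w s] eq len w by (simp add: GW_def)
  have k: "fst (walk_pos h w' k) \<ge> 0 \<and> snd (walk_pos h w' k) \<ge> 0" if "k \<le> Suc n" for k
  proof (cases "k = Suc n")
    case True then show ?thesis using fin assms by simp
  next
    case False then show ?thesis using that w eq len wp_app_le[of k w h s] by (auto simp: GW_def)
  qed
  show "w' \<in> GW h (Suc n) x y" using s w eq len fin k by (auto simp: GW_def)
qed

lemma card_GW_Suc:
  assumes "0 \<le> x" "0 \<le> y"
  shows "card (GW h (Suc n) x y) = card (GW h n x (y - 1)) + card (GW h n x (y + 1))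
     + card (GW h n (x - 1) (y - 1)) + card (GW h n (x + 1) (y + 1))"
proof -
  have "card (GW h (Suc n) x y) = (\<Sum>s\<in>gessel_steps. card ((\<lambda>w. w @ [s]) ` GW h n (x - fst s) (y - snd s)))"
    unfolding GW_Suc[OF assms]
    apply (rule card_UN_disjoint)
      apply (simp add: gessel_steps_def)
     apply (simp add: finite_GW)
    apply auto
    done
  also have "\<dots> = (\<Sum>s\<in>gessel_steps. card (GW h n (x - fst s) (y - snd s)))"
    by (intro sum.cong refl card_image) (auto simp: inj_on_def)
  also have "\<dots> = card (GW h n x (y - 1)) + card (GW h n x (y + 1))
     + card (GW h n (x - 1) (y - 1)) + card (GW h n (x + 1) (y + 1))"
    by (simp add: gessel_steps_def)
  finally show ?thesis .
qed



lemma swap_sum: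
  fixes c f :: "nat \<Rightarrow> nat"
  shows "(\<Sum>j'\<le>Suc n. c j' * (\<Sum>j\<in>{j'..n}. f j)) = (\<Sum>j\<le>n. f j * (\<Sum>j'\<le>j. c j'))"
proof -
  have "(\<Sum>j'\<le>Suc n. c j' * (\<Sum>j\<in>{j'..n}. f j)) = (\<Sum>j'\<le>Suc n. \<Sum>j\<le>n. if j' \<le> j then c j' * f j else 0)"
  proof (intro sum.cong refl)
    fix j' assume "j' \<in> {..Suc n}"
    have e: "{j'..n} = {j \<in> {..n}. j' \<le> j}" by auto
    have "(\<Sum>j\<in>{j \<in> {..n}. j' \<le> j}. c j' * f j) = (\<Sum>j\<le>n. if j' \<le> j then c j' * f j else 0)"
      by (rule sum.inter_filter) simp
    then show "c j' * (\<Sum>j\<in>{j'..n}. f j) = (\<Sum>j\<le>n. if j' \<le> j then c j' * f j else 0)"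
      by (simp only: e sum_distrib_left)
  qed
  also have "\<dots> = (\<Sum>j\<le>n. \<Sum>j'\<le>Suc n. if j' \<le> j then c j' * f j else 0)"
    by (rule sum.swap)
  also have "\<dots> = (\<Sum>j\<le>n. f j * (\<Sum>j'\<le>j. c j'))"
  proof (intro sum.cong refl)
    fix j assume "j \<in> {..n}"
    then have e: "{..j} = {j' \<in> {..Suc n}. j' \<le> j}" by auto
    have "(\<Sum>j'\<in>{j' \<in> {..Suc n}. j' \<le> j}. c j' * f j) = (\<Sum>j'\<le>Suc n. if j' \<le> j then c j' * f j else 0)"
      by (rule sum.inter_filter) simp
    then show "(\<Sum>j'\<le>Suc n. if j' \<le> j then c j' * f j else 0) = f j * (\<Sum>j'\<le>j. c j')"
      by (simp only: e sum_distrib_left mult.commute)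
  qed
  finally show ?thesis .
qed

lemma choose_Suc_split: "(Suc j choose x) = (j choose x) + (if x = 0 then 0 else j choose (x - 1))"
  by (cases x) auto

lemma main_identity:
  "card (GW h n (int x) y) = (\<Sum>j\<le>n. (j choose x) * card (PS h n y j))"
proof (induction n arbitrary: x y)
  case 0
  then show ?case by (simp add: card_GW_0 card_PS_0)
next
  case (Suc n)
  show ?case
  proof (cases "y < 0")
    case True
    then show ?thesis by (simp add: GW_neg PS_neg)
  next
    case False
    then have y: "0 \<le> y" by simp
    define a where "a = (\<lambda>j y. card (PS h n y j))"
    have S1: "(\<Sum>j'\<le>Suc n. (j' choose x) * (if j' = 0 then 0 else a (j' - 1) (y - 1)))
        = card (GW h n (int x) (y - 1)) + (if x = 0 then 0 else card (GW h n (int (x - 1)) (y - 1)))"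
    proof -
      have "(\<Sum>j'\<le>Suc n. (j' choose x) * (if j' = 0 then 0 else a (j' - 1) (y - 1)))
          = (\<Sum>j\<le>n. (Suc j choose x) * a j (y - 1))"
        by (subst sum.atMost_Suc_shift) simp
      also have "\<dots> = (\<Sum>j\<le>n. (j choose x) * a j (y - 1)) + (if x = 0 then 0 else (\<Sum>j\<le>n. (j choose (x - 1)) * a j (y - 1)))"
        by (simp add: choose_Suc_split algebra_simps sum.distrib)
      finally have eq: "(\<Sum>j'\<le>Suc n. (j' choose x) * (if j' = 0 then 0 else a (j' - 1) (y - 1)))
        = (\<Sum>j\<le>n. (j choose x) * a j (y - 1)) + (if x = 0 then 0 else (\<Sum>j\<le>n. (j choose (x - 1)) * a j (y - 1)))" .
      have i1: "card (GW h n (int x) (y - 1)) = (\<Sum>j\<le>n. (j choose x) * a j (y - 1))"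
        by (simp only: a_def Suc.IH)
      have i2: "card (GW h n (int (x - 1)) (y - 1)) = (\<Sum>j\<le>n. (j choose (x - 1)) * a j (y - 1))"
        by (simp only: a_def Suc.IH)
      show ?thesis
      proof (cases "x = 0")
        case True then show ?thesis using eq i1 by simp
      next
        case False then show ?thesis using eq i1 i2 by simp
      qed
    qed
    have S2: "(\<Sum>j'\<le>Suc n. (j' choose x) * (\<Sum>j\<in>{j'..n}. a j (y + 1)))
        = card (GW h n (int x) (y + 1)) + card (GW h n (int (Suc x)) (y + 1))"
    proof -
      have "(\<Sum>j'\<le>Suc n. (j' choose x) * (\<Sum>j\<in>{j'..n}. a j (y + 1)))
          = (\<Sum>j\<le>n. a j (y + 1) * (Suc j choose Suc x))"
        by (simp only: swap_sum sum_choose_upper)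
      also have "\<dots> = (\<Sum>j\<le>n. (j choose x) * a j (y + 1)) + (\<Sum>j\<le>n. (j choose Suc x) * a j (y + 1))"
        by (simp add: algebra_simps sum.distrib)
      finally have eq: "(\<Sum>j'\<le>Suc n. (j' choose x) * (\<Sum>j\<in>{j'..n}. a j (y + 1)))
          = (\<Sum>j\<le>n. (j choose x) * a j (y + 1)) + (\<Sum>j\<le>n. (j choose Suc x) * a j (y + 1))" .
      have i1: "card (GW h n (int x) (y + 1)) = (\<Sum>j\<le>n. (j choose x) * a j (y + 1))"
        by (simp only: a_def Suc.IH)
      have i2: "card (GW h n (int (Suc x)) (y + 1)) = (\<Sum>j\<le>n. (j choose (Suc x)) * a j (y + 1))"
        by (simp only: a_def Suc.IH)
      show ?thesis using eq i1 i2 by simp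
    qed
    have L: "card (GW h (Suc n) (int x) y) = card (GW h n (int x) (y - 1)) + card (GW h n (int x) (y + 1))
     + (if x = 0 then 0 else card (GW h n (int (x - 1)) (y - 1))) + card (GW h n (int (Suc x)) (y + 1))"
      using card_GW_Suc[of "int x" y h n] y
      by (cases x) (simp_all add: GW_neg add_ac)
    have R: "(\<Sum>j\<le>Suc n. (j choose x) * card (PS h (Suc n) y j))
        = (\<Sum>j'\<le>Suc n. (j' choose x) * (if j' = 0 then 0 else a (j' - 1) (y - 1)))
          + (\<Sum>j'\<le>Suc n. (j' choose x) * (\<Sum>j\<in>{j'..n}. a j (y + 1)))"
      unfolding a_def
      by (simp add: card_PS_Suc[OF y] sum.distrib algebra_simps del: sum.atMost_Suc)
    show ?thesis using L R S1 S2 by simp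
  qed
qed

theorem theorem4p2:
  fixes n h b :: nat
  shows "card (ballot_213 n h b) = card (gessel_walks n h b)"
  using main_identity[of h n 0 "int b"] by (simp add: card_ballot_213 gessel_GW)


end
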